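(* For all positive integers $n$ and $k$, \[ |\mathrm{Hom}^1(P_n,P_k)| = \sum_{j\in\mathbb Z}\left(\binom{n-1}{\lceil (n-1)/2\rceil - j(k+1)} - \binom{n-1}{\lfloor (n+k)/2\rfloor - j(k+1)}\right). \]
   Context: For a positive integer $m$, $P_m$ denotes the path with vertex set $[m]=\{1,\dots,m\}$ in which $i$ and $j$ are adjacent iff $|i-j|=1$; $\mathrm{Hom}(P_n,P_k)$ is the set of maps $f:[n]\to[k]$ with $|f(i)-f(i+1)|=1$ for $1\le i\le n-1$, and $\mathrm{Hom}^1(P_n,P_k)=\{f\in\mathrm{Hom}(P_n,P_k): f(1)=1\}$. Convention: $\binom{a}{b}=0$ if $b<0$ or $b>a$. *)

theory Defs
  imports "HOL-Analysis.Analysis"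
begin

definition path_hom :: "nat \<Rightarrow> nat \<Rightarrow> (nat \<Rightarrow> nat) set" where
  "path_hom n k = {f \<in> {1..n} \<rightarrow>\<^sub>E {1..k}.
      \<forall>i. 1 \<le> i \<and> i \<le> n - 1 \<longrightarrow> \<bar>int (f i) - int (f (i + 1))\<bar> = 1}"

definition path_hom1 :: "nat \<Rightarrow> nat \<Rightarrow> (nat \<Rightarrow> nat) set" where
  "path_hom1 n k = {f \<in> path_hom n k. f 1 = 1}"

definition binom_int :: "nat \<Rightarrow> int \<Rightarrow> int" where
  "binom_int a b = (if b < 0 \<or> b > int a then 0 else int (a choose nat b))"

end

theory Submission
  imports Defs
begin

fun Q :: "nat \<Rightarrow> nat \<Rightarrow> int \<Rightarrow> int" where
  "Q k 0 d = (if (2*int k+2) dvd d then 1 else 0)"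
| "Q k (Suc m) d = Q k m (d-1) + Q k m (d+1)"

definition P :: "nat \<Rightarrow> int \<Rightarrow> int" where
  "P m e = (if even (int m + e) then binom_int m ((int m + e) div 2) else 0)"

lemma binom_pascal: "binom_int (Suc m) t = binom_int m (t-1) + binom_int m t"
proof -
  consider "t < 0" | "t = 0" | "t = int m + 1" | "t > int m + 1" | "1 \<le> t \<and> t \<le> int m" by linarith
  then show ?thesis
  proof cases
    case 5
    define s where "s = nat t - 1"
    have s: "t = int (Suc s)" "s < m" using 5 unfolding s_def by auto
    have n1: "nat t = Suc s" "nat (t - 1) = s" using s by auto
    show ?thesis using s(2) 5 unfolding binom_int_def n1 by simp
  next
    case 3
    have "nat t = Suc m" "nat (t-1) = m" using 3 by auto
    then show ?thesis using 3 unfolding binom_int_def by simp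
  qed (auto simp: binom_int_def)
qed

lemma P_suc: "P (Suc m) e = P m (e-1) + P m (e+1)"
proof (cases "even (int m + 1 + e)")
  case True
  have a: "(int m + 1 + e) div 2 - 1 = (int m + (e - 1)) div 2" using True by presburger
  have b: "(int m + 1 + e) div 2 = (int m + (e + 1)) div 2" by presburger
  have c: "even (int m + (e-1))" "even (int m + (e+1))" using True by presburger+
  define t where "t = (int m + 1 + e) div 2"
  have 1: "P (Suc m) e = binom_int (Suc m) t" unfolding P_def t_def using True by (simp add: ac_simps)
  have 2: "P m (e-1) = binom_int m (t-1)" unfolding P_def t_def using c(1) a by simp
  have 3: "P m (e+1) = binom_int m t" unfolding P_def t_def using c(2) b by simp
  show ?thesis unfolding 1 2 3 by (rule binom_pascal)
next
  case False
  have c: "odd (int m + (e-1))" "odd (int m + (e+1))" "odd (int (Suc m) + e)" using False by presburger+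
  then show ?thesis unfolding P_def by simp
qed

lemma P_pair: "P m e + P m (e+1) = binom_int m ((int m + e + 1) div 2)"
  unfolding P_def by (auto simp: algebra_simps)

lemma P_0: "P 0 e = (if e = 0 then 1 else 0)"
  unfolding P_def binom_int_def by auto presburger?

lemma Q_sym: "Q k m (-d) = Q k m d"
proof (induction m arbitrary: d)
  case 0 then show ?case by simp
next
  case (Suc m)
  have e1: "-d - 1 = -(d+1)" "-d + 1 = -(d-1)" by simp_all
  have "Q k m (-d - 1) = Q k m (d+1)" unfolding e1 by (rule Suc)
  moreover have "Q k m (-d + 1) = Q k m (d-1)" unfolding e1 by (rule Suc)
  ultimately show ?case by simp
qed

lemma Q_per: "Q k m (d + (2*int k+2)) = Q k m d"
proof (induction m arbitrary: d)
  case 0 then show ?case by (simp add: dvd_add_left_iff)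
next
  case (Suc m)
  have "Q k m (d + (2*int k+2) - 1) = Q k m (d-1)" using Suc[of "d-1"] by (simp add: algebra_simps)
  moreover have "Q k m (d + (2*int k+2) + 1) = Q k m (d+1)" using Suc[of "d+1"] by (simp add: algebra_simps)
  ultimately show ?case by simp
qed

lemma Q_zero1: "Q k m (-1) - Q k m 1 = 0"
  using Q_sym[of k m 1] by simp

lemma Q_zero2: "Q k m (int k) - Q k m (int k + 2) = 0"
proof -
  have "Q k m (int k + 2) = Q k m (- int k)"
    using Q_per[of k m "- int k"] by (simp add: algebra_simps)
  then show ?thesis using Q_sym[of k m "int k"] by simp
qed

lemma Q_hassum: "((\<lambda>j::int. P m (d - j*(2*int k+2))) has_sum Q k m d) UNIV"
proof (induction m arbitrary: d)
  case 0
  show ?case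
  proof (cases "(2*int k+2) dvd d")
    case True
    then obtain j0 where j0: "d = (2*int k+2) * j0" by (auto elim: dvdE)
    have "((\<lambda>j::int. P 0 (d - j*(2*int k+2))) has_sum (\<Sum>j\<in>{j0}. P 0 (d - j*(2*int k+2)))) UNIV"
    proof (rule has_sum_finite_neutralI)
      fix j assume "j \<in> UNIV - {j0}"
      then have "(2*int k+2) * (j0 - j) \<noteq> 0" by simp
      moreover have "d - j*(2*int k+2) = (2*int k+2) * (j0 - j)" using j0 by (simp add: algebra_simps)
      ultimately have "d - j*(2*int k+2) \<noteq> 0" by simp
      then show "P 0 (d - j*(2*int k+2)) = 0" by (simp add: P_0)
    qed auto
    then show ?thesis using True j0 by (simp add: P_0 algebra_simps)
  next
    case False
    have "P 0 (d - j*(2*int k+2)) = 0" for j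
    proof -
      have "d - j*(2*int k+2) \<noteq> 0" using False by (metis dvd_triv_right eq_iff_diff_eq_0)
      then show ?thesis by (simp add: P_0)
    qed
    then show ?thesis using False by simp
  qed
next
  case (Suc m)
  have "((\<lambda>j::int. P m (d - 1 - j*(2*int k+2)) + P m (d + 1 - j*(2*int k+2))) has_sum (Q k m (d-1) + Q k m (d+1))) UNIV"
    by (intro has_sum_add Suc)
  then show ?case by (simp add: P_suc algebra_simps)
qed

lemma finite_hom: "finite (path_hom n k)"
proof -
  have "path_hom n k \<subseteq> {1..n} \<rightarrow>\<^sub>E {1..k}" unfolding path_hom_def by auto
  moreover have "finite ({1..n} \<rightarrow>\<^sub>E {1..k})" by (intro finite_PiE) auto
  ultimately show ?thesis by (rule finite_subset)
qed

lemma finite_hom1: "finite (path_hom1 n k)"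
  using finite_hom[of n k] unfolding path_hom1_def by auto

lemma hom_vals: "f \<in> path_hom n k \<Longrightarrow> i \<in> {1..n} \<Longrightarrow> f i \<in> {1..k}"
  unfolding path_hom_def by auto

definition cnt :: "nat \<Rightarrow> nat \<Rightarrow> nat \<Rightarrow> nat" where
  "cnt n k b = card {f \<in> path_hom1 n k. f n = b}"

lemma cnt_out: assumes "n \<ge> 1" "b = 0 \<or> b > k" shows "cnt n k b = 0"
proof -
  have e: "{f \<in> path_hom1 n k. f n = b} = {}"
    using hom_vals[of _ n k n] assms unfolding path_hom1_def by fastforce
  show ?thesis unfolding cnt_def e by (rule card.empty)
qed

lemma cnt_1: assumes "k \<ge> 1" shows "cnt 1 k b = (if b = 1 then 1 else 0)"
proof -
  have "path_hom1 1 k = {restrict (\<lambda>_. 1) {1..1}}"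
  proof
    show "path_hom1 1 k \<subseteq> {restrict (\<lambda>_. 1) {1..1}}"
    proof
      fix f assume f: "f \<in> path_hom1 1 k"
      then have "f \<in> {1..1} \<rightarrow>\<^sub>E {1..k}" "f 1 = 1" unfolding path_hom1_def path_hom_def by auto
      then have "f = restrict (\<lambda>_. 1) {1..1}" by (auto simp: PiE_iff extensional_def)
      then show "f \<in> {restrict (\<lambda>_. 1) {1..1}}" by simp
    qed
    show "{restrict (\<lambda>_. 1) {1..1}} \<subseteq> path_hom1 1 k"
      using assms unfolding path_hom1_def path_hom_def by auto
  qed
  then have "{f \<in> path_hom1 1 k. f 1 = b} = (if b = 1 then {restrict (\<lambda>_. 1) {1..1}} else {})"
    by auto
  then show ?thesis unfolding cnt_def by simp
qed

lemma ext_bij: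
  assumes n: "n \<ge> 1" and b: "1 \<le> b" "b \<le> k"
  shows "bij_betw (\<lambda>f. restrict f {1..n}) {f \<in> path_hom1 (Suc n) k. f (Suc n) = b}
           {g \<in> path_hom1 n k. g n = b - 1 \<or> g n = b + 1}"
proof (rule bij_betw_byWitness[where f' = "\<lambda>g. g(Suc n := b)"])
  show "\<forall>f\<in>{f \<in> path_hom1 (Suc n) k. f (Suc n) = b}. (restrict f {1..n})(Suc n := b) = f"
  proof
    fix f assume f: "f \<in> {f \<in> path_hom1 (Suc n) k. f (Suc n) = b}"
    then have fe: "f \<in> {1..Suc n} \<rightarrow>\<^sub>E {1..k}" "f (Suc n) = b"
      unfolding path_hom1_def path_hom_def by auto
    show "(restrict f {1..n})(Suc n := b) = f"
    proof
      fix x show "((restrict f {1..n})(Suc n := b)) x = f x"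
        using fe by (cases "x = Suc n") (auto simp: PiE_iff extensional_def)
    qed
  qed
  show "\<forall>g\<in>{g \<in> path_hom1 n k. g n = b - 1 \<or> g n = b + 1}. restrict (g(Suc n := b)) {1..n} = g"
  proof
    fix g assume g: "g \<in> {g \<in> path_hom1 n k. g n = b - 1 \<or> g n = b + 1}"
    then have ge: "g \<in> {1..n} \<rightarrow>\<^sub>E {1..k}" unfolding path_hom1_def path_hom_def by auto
    show "restrict (g(Suc n := b)) {1..n} = g"
    proof
      fix x show "restrict (g(Suc n := b)) {1..n} x = g x"
        using ge by (auto simp: PiE_iff extensional_def)
    qed
  qed
  show "(\<lambda>f. restrict f {1..n}) ` {f \<in> path_hom1 (Suc n) k. f (Suc n) = b}
        \<subseteq> {g \<in> path_hom1 n k. g n = b - 1 \<or> g n = b + 1}"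
  proof
    fix g assume "g \<in> (\<lambda>f. restrict f {1..n}) ` {f \<in> path_hom1 (Suc n) k. f (Suc n) = b}"
    then obtain f where f: "f \<in> path_hom1 (Suc n) k" "f (Suc n) = b" and g: "g = restrict f {1..n}" by auto
    have fe: "f \<in> {1..Suc n} \<rightarrow>\<^sub>E {1..k}" "f 1 = 1"
      and adj: "\<And>i. 1 \<le> i \<Longrightarrow> i \<le> n \<Longrightarrow> \<bar>int (f i) - int (f (i + 1))\<bar> = 1"
      using f unfolding path_hom1_def path_hom_def by auto
    have "g \<in> {1..n} \<rightarrow>\<^sub>E {1..k}" using fe unfolding g by (auto simp: PiE_iff)
    moreover have "\<forall>i. 1 \<le> i \<and> i \<le> n - 1 \<longrightarrow> \<bar>int (g i) - int (g (i + 1))\<bar> = 1"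
      using adj unfolding g by auto
    moreover have "g 1 = 1" using fe n unfolding g by auto
    moreover have "g n = b - 1 \<or> g n = b + 1"
    proof -
      have "\<bar>int (f n) - int b\<bar> = 1" using adj[of n] n f(2) by simp
      then have "g n = f n" "int (f n) = int b - 1 \<or> int (f n) = int b + 1" using n unfolding g by auto
      then show ?thesis using b by auto
    qed
    ultimately show "g \<in> {g \<in> path_hom1 n k. g n = b - 1 \<or> g n = b + 1}"
      unfolding path_hom1_def path_hom_def by auto
  qed
  show "(\<lambda>g. g(Suc n := b)) ` {g \<in> path_hom1 n k. g n = b - 1 \<or> g n = b + 1}
        \<subseteq> {f \<in> path_hom1 (Suc n) k. f (Suc n) = b}"
  proof
    fix f assume "f \<in> (\<lambda>g. g(Suc n := b)) ` {g \<in> path_hom1 n k. g n = b - 1 \<or> g n = b + 1}"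
    then obtain g where g: "g \<in> path_hom1 n k" "g n = b - 1 \<or> g n = b + 1" and f: "f = g(Suc n := b)" by auto
    have ge: "g \<in> {1..n} \<rightarrow>\<^sub>E {1..k}" "g 1 = 1"
      and adj: "\<And>i. 1 \<le> i \<Longrightarrow> i \<le> n - 1 \<Longrightarrow> \<bar>int (g i) - int (g (i + 1))\<bar> = 1"
      using g unfolding path_hom1_def path_hom_def by auto
    have "f \<in> {1..Suc n} \<rightarrow>\<^sub>E {1..k}" using ge b unfolding f by (auto simp: PiE_iff extensional_def)
    moreover have "\<bar>int (f i) - int (f (i + 1))\<bar> = 1" if i: "1 \<le> i" "i \<le> Suc n - 1" for i
    proof (cases "i = n")
      case True
      then show ?thesis using g(2) b unfolding f by auto
    next
      case False
      then show ?thesis using adj[of i] i unfolding f by auto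
    qed
    moreover have "f 1 = 1" using ge n unfolding f by auto
    moreover have "f (Suc n) = b" unfolding f by simp
    ultimately show "f \<in> {f \<in> path_hom1 (Suc n) k. f (Suc n) = b}"
      unfolding path_hom1_def path_hom_def by auto
  qed
qed

lemma cnt_step:
  assumes n: "n \<ge> 1" and b: "1 \<le> b" "b \<le> k"
  shows "cnt (Suc n) k b = cnt n k (b - 1) + cnt n k (b + 1)"
proof -
  have "cnt (Suc n) k b = card {g \<in> path_hom1 n k. g n = b - 1 \<or> g n = b + 1}"
    unfolding cnt_def using bij_betw_same_card[OF ext_bij[OF assms]] by simp
  also have "{g \<in> path_hom1 n k. g n = b - 1 \<or> g n = b + 1}
     = {g \<in> path_hom1 n k. g n = b - 1} \<union> {g \<in> path_hom1 n k. g n = b + 1}" by auto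
  also have "card \<dots> = cnt n k (b - 1) + cnt n k (b + 1)"
    unfolding cnt_def using b by (intro card_Un_disjoint) (auto intro: finite_subset[OF _ finite_hom1])
  finally show ?thesis .
qed

lemma card_sum: assumes "n \<ge> 1" shows "card (path_hom1 n k) = (\<Sum>b\<in>{1..k}. cnt n k b)"
proof -
  have "path_hom1 n k = (\<Union>b\<in>{1..k}. {f \<in> path_hom1 n k. f n = b})"
    using hom_vals[of _ n k n] assms unfolding path_hom1_def by auto
  then have "card (path_hom1 n k) = card (\<Union>b\<in>{1..k}. {f \<in> path_hom1 n k. f n = b})" by simp
  also have "\<dots> = (\<Sum>b\<in>{1..k}. cnt n k b)"
    unfolding cnt_def by (intro card_UN_disjoint) (auto intro: finite_subset[OF _ finite_hom1])
  finally show ?thesis .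
qed

lemma small_dvd: assumes "(c::int) dvd x" "-c < x" "x < c" shows "x = 0"
proof -
  obtain q where q: "x = c * q" using assms(1) by (auto elim: dvdE)
  have c: "c > 0" using assms by simp
  show ?thesis
  proof (cases "q = 0")
    case False
    then consider "q \<ge> 1" | "q \<le> -1" by linarith
    then show ?thesis
    proof cases
      case 1 then have "c \<le> c * q" using mult_left_mono[of 1 q c] c by simp
      then show ?thesis using q assms by linarith
    next
      case 2 then have "c * q \<le> - c" using mult_left_mono[of q "-1" c] c by simp
      then show ?thesis using q assms by linarith
    qed
  qed (use q in simp)
qed

lemma cnt_Q:
  assumes k: "k \<ge> 1"
  shows "b \<le> k + 1 \<Longrightarrow> int (cnt (Suc m) k b) = Q k m (int b - 1) - Q k m (int b + 1)"
proof (induction m arbitrary: b)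
  case 0
  have q1: "Q k 0 (int b + 1) = 0"
  proof (rule ccontr)
    assume "Q k 0 (int b + 1) \<noteq> 0"
    then have "(2*int k+2) dvd (int b + 1)" by (simp split: if_splits)
    then have "int b + 1 = 0" by (rule small_dvd) (use 0 k in auto)
    then show False by simp
  qed
  have q0: "Q k 0 (int b - 1) = (if b = 1 then 1 else 0)"
  proof (cases "b = 1")
    case False
    have "\<not> (2*int k+2) dvd (int b - 1)"
    proof
      assume "(2*int k+2) dvd (int b - 1)"
      then have "int b - 1 = 0" by (rule small_dvd) (use 0 k in auto)
      then show False using False by simp
    qed
    then show ?thesis using False by simp
  qed simp
  show ?case using cnt_1[OF k, of b] q0 q1 by simp
next
  case (Suc m)
  consider "b = 0" | "b = k + 1" | "1 \<le> b \<and> b \<le> k" using Suc.prems by linarith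
  then show ?case
  proof cases
    case 1
    then show ?thesis using cnt_out[of "Suc (Suc m)" b k] Q_zero1[of k "Suc m"] by simp
  next
    case 2
    then show ?thesis using cnt_out[of "Suc (Suc m)" b k] Q_zero2[of k "Suc m"] by (simp add: algebra_simps)
  next
    case 3
    have "int (cnt (Suc (Suc m)) k b) = int (cnt (Suc m) k (b - 1)) + int (cnt (Suc m) k (b + 1))"
      using cnt_step[of "Suc m" b k] 3 by simp
    also have "\<dots> = (Q k m (int b - 2) - Q k m (int b)) + (Q k m (int b) - Q k m (int b + 2))"
    proof -
      have h1: "b - 1 \<le> k + 1" "b + 1 \<le> k + 1" using 3 by auto
      have e1: "int (b - 1) - 1 = int b - 2" "int (b - 1) + 1 = int b" using 3 by auto
      have e2: "int (b + 1) - 1 = int b" "int (b + 1) + 1 = int b + 2" by auto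
      show ?thesis using Suc.IH[OF h1(1)] Suc.IH[OF h1(2)] unfolding e1 e2 by simp
    qed
    also have "\<dots> = Q k (Suc m) (int b - 1) - Q k (Suc m) (int b + 1)"
      by (simp add: algebra_simps)
    finally show ?thesis .
  qed
qed

lemma telescope: "(\<Sum>b\<in>{1..k}. (g (int b - 1) - g (int b + 1)) :: int) = g 0 + g 1 - g (int k) - g (int k + 1)"
proof (induction k)
  case 0 then show ?case by simp
next
  case (Suc k)
  then show ?case by (simp add: algebra_simps)
qed

lemma has_sum_diff_int:
  assumes "(f has_sum a) A" "(g has_sum b) A"
  shows "((\<lambda>x. f x - g x :: int) has_sum (a - b)) A"
  using has_sum_add[OF assms(1) has_sum_uminusI[OF assms(2)]] by simp

lemma idx: "(int m + (d - j * (2 * int k + 2)) + 1) div 2 = (int m + d + 1) div 2 - j * (int k + 1)"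
proof -
  have "int m + (d - j * (2 * int k + 2)) + 1 = (int m + d + 1) + 2 * (- j * (int k + 1))"
    by (simp add: algebra_simps)
  moreover have "(x + 2 * y) div 2 = x div 2 + y" for x y :: int by presburger
  ultimately show ?thesis by (simp only:)
qed

theorem mainTheorem4:
  fixes n k :: nat
  assumes "n \<ge> 1" and "k \<ge> 1"
  shows "((\<lambda>j::int. binom_int (n - 1) (\<lceil>(real n - 1) / 2\<rceil> - j * (int k + 1))
                   - binom_int (n - 1) (\<lfloor>(real n + real k) / 2\<rfloor> - j * (int k + 1)))
          has_sum int (card (path_hom1 n k))) UNIV"
proof -
  obtain m where n: "n = Suc m" using assms(1) by (cases n) auto
  let ?c = "2 * int k + 2"
  have "int (card (path_hom1 n k)) = (\<Sum>b\<in>{1..k}. int (cnt (Suc m) k b))"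
    using card_sum[OF assms(1)] n by simp
  also have "\<dots> = (\<Sum>b\<in>{1..k}. Q k m (int b - 1) - Q k m (int b + 1))"
    by (intro sum.cong refl cnt_Q[OF assms(2)]) auto
  also have "\<dots> = (Q k m 0 + Q k m 1) - (Q k m (int k) + Q k m (int k + 1))"
    using telescope[of "Q k m" k] by simp
  finally have card_eq: "int (card (path_hom1 n k)) = (Q k m 0 + Q k m 1) - (Q k m (int k) + Q k m (int k + 1))" .
  have hs: "((\<lambda>j. (P m (0 - j * ?c) + P m (1 - j * ?c)) - (P m (int k - j * ?c) + P m (int k + 1 - j * ?c)))
        has_sum ((Q k m 0 + Q k m 1) - (Q k m (int k) + Q k m (int k + 1)))) UNIV"
    by (intro has_sum_diff_int has_sum_add Q_hassum)
  have ceq: "\<lceil>(real n - 1) / 2\<rceil> = (int m + 0 + 1) div 2"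
  proof -
    have "(real n - 1) / 2 = of_int (int m) / of_int 2" using n by simp
    then have "\<lceil>(real n - 1) / 2\<rceil> = - (- int m div 2)" by (simp only: ceiling_divide_eq_div)
    also have "\<dots> = (int m + 0 + 1) div 2" by presburger
    finally show ?thesis .
  qed
  have feq: "\<lfloor>(real n + real k) / 2\<rfloor> = (int m + int k + 1) div 2"
  proof -
    have "(real n + real k) / 2 = of_int (int m + int k + 1) / of_int 2" using n by simp
    then show ?thesis by (simp only: floor_divide_of_int_eq)
  qed
  have term_eq: "(P m (0 - j * ?c) + P m (1 - j * ?c)) - (P m (int k - j * ?c) + P m (int k + 1 - j * ?c))
     = binom_int (n - 1) (\<lceil>(real n - 1) / 2\<rceil> - j * (int k + 1))
       - binom_int (n - 1) (\<lfloor>(real n + real k) / 2\<rfloor> - j * (int k + 1))" for j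
  proof -
    have a: "P m (0 - j * ?c) + P m (1 - j * ?c) = binom_int m ((int m + 0 + 1) div 2 - j * (int k + 1))"
    proof -
      have eq: "1 - j * ?c = (0 - j * ?c) + 1" by simp
      have "P m (0 - j * ?c) + P m (1 - j * ?c) = binom_int m ((int m + (0 - j * ?c) + 1) div 2)"
        unfolding eq by (rule P_pair)
      then show ?thesis unfolding idx .
    qed
    have b: "P m (int k - j * ?c) + P m (int k + 1 - j * ?c) = binom_int m ((int m + int k + 1) div 2 - j * (int k + 1))"
    proof -
      have eq: "int k + 1 - j * ?c = (int k - j * ?c) + 1" by simp
      have "P m (int k - j * ?c) + P m (int k + 1 - j * ?c) = binom_int m ((int m + (int k - j * ?c) + 1) div 2)"
        unfolding eq by (rule P_pair)
      then show ?thesis unfolding idx .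
    qed
    show ?thesis unfolding a b ceq feq using n by simp
  qed
  show ?thesis using hs unfolding term_eq card_eq[symmetric] .
qed

end
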